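(* Let $B\in\mathbb{Z}^{n\times n}$ and $b\in\mathbb{Z}^n$. Define a relation on $\mathbb{Z}^n$ by $x\sim y$ if and only if there exists $z\in\mathbb{Z}^n$ with $x-y=Bz$ or $x+y+b=Bz$. Then $\sim$ is an equivalence relation and its number of equivalence classes is $$E(B,b)=\frac{|\det(B)|_\infty+O(B,b)}{2}.$$
   Context: $O(B,b)$ denotes the number of solutions $\bar x\in\mathbb{Z}_2^n$ of the linear system $\bar B\bar x=\bar b$ over $\mathbb{Z}_2=\mathbb{Z}/2\mathbb{Z}$, where the bar denotes reduction modulo $2$. For an integer $x$, $|x|_\infty=|x|$ if $x\neq 0$ and $|x|_\infty=\infty$ if $x=0$; arithmetic with $\infty$ follows $(\infty+k)/2=\infty$. *)

theory Defs
  imports "HOL-Analysis.Analysis" "HOL-Library.Z2"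
begin

definition mat_mod2 :: "int^'n^'m \<Rightarrow> bit^'n^'m" where
  "mat_mod2 B = (\<chi> i j. of_int (B $ i $ j))"

definition vec_mod2 :: "int^'n \<Rightarrow> bit^'n" where
  "vec_mod2 b = (\<chi> i. of_int (b $ i))"

definition O_count :: "int^'n^'n \<Rightarrow> int^'n \<Rightarrow> nat" where
  "O_count B b = card {x :: bit^'n. mat_mod2 B *v x = vec_mod2 b}"

definition sim_rel :: "int^'n^'n \<Rightarrow> int^'n \<Rightarrow> ((int^'n) \<times> (int^'n)) set" where
  "sim_rel B b = {(x, y). \<exists>z. x - y = B *v z \<or> x + y + b = B *v z}"

end

theory Submission
  imports Defs "HOL-Computational_Algebra.Primes"
begin


definition rmat :: "int^'n^'m \<Rightarrow> real^'n^'m" where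
  "rmat B = (\<chi> i j. real_of_int (B$i$j))"
definition rvec :: "int^'n \<Rightarrow> real^'n" where
  "rvec v = (\<chi> i. real_of_int (v$i))"

lemma rmat_mult: "rmat B *v rvec z = rvec (B *v z)"
  by (simp add: rmat_def rvec_def matrix_vector_mult_def vec_eq_iff)

lemma det_rmat: "det (rmat B) = real_of_int (det B)"
  by (simp add: det_def rmat_def)

lemma rvec_inj: "rvec x = rvec y \<Longrightarrow> x = y"
  by (simp add: rvec_def vec_eq_iff)

lemma bit_of_int_0: "(of_int k :: bit) = 0 \<longleftrightarrow> even k"
proof -
  have "(of_int k :: bit) = of_int (2 * (k div 2) + k mod 2)" by simp
  also have "\<dots> = of_int 2 * of_int (k div 2) + of_int (k mod 2)"
    by (simp only: of_int_add of_int_mult)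
  also have "\<dots> = of_int (k mod 2)" by simp
  finally show ?thesis
    by (cases "even k") (auto simp: even_iff_mod_2_eq_zero odd_iff_mod_2_eq_one)
qed

definition cr :: "int^'n^'n \<Rightarrow> int^'n \<Rightarrow> int^'n" where
  "cr B b = (\<chi> k. det (\<chi> i j. if j = k then b$i else B$i$j))"

lemma adj_int:
  assumes d: "det B \<noteq> 0"
  shows "B *v cr B b = det B *s b"
proof -
  let ?d = "det (rmat B)"
  have d0: "?d \<noteq> 0" using d by (simp add: det_rmat)
  define x0 where "x0 = (\<chi> k. det(\<chi> i j. if j=k then (rvec b)$i else (rmat B)$i$j) / ?d)"
  have "rmat B *v x0 = rvec b"
    using cramer[OF d0, of x0 "rvec b"] x0_def by simp
  have e: "det(\<chi> i j. if j=k then (rvec b)$i else (rmat B)$i$j) = real_of_int (cr B b $ k)" for k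
  proof -
    have "(\<chi> i j. if j=k then (rvec b)$i else (rmat B)$i$j) = rmat (\<chi> i j. if j = k then b$i else B$i$j)"
      by (simp add: rmat_def rvec_def vec_eq_iff)
    then show ?thesis by (simp add: det_rmat cr_def)
  qed
  have "rvec (cr B b) = ?d *s x0"
    using d0 by (simp add: vec_eq_iff x0_def e rvec_def)
  then have "rvec (B *v cr B b) = ?d *s (rmat B *v x0)"
    by (metis rmat_mult vector_scalar_commute)
  also have "\<dots> = rvec (det B *s b)"
    using \<open>rmat B *v x0 = rvec b\<close> by (simp add: det_rmat rvec_def vec_eq_iff)
  finally show ?thesis by (rule rvec_inj)
qed

lemma mv_smult: "(A::'a::comm_ring_1^'n^'m) *v (c *s x) = c *s (A *v x)"
  by (simp add: vec_eq_iff matrix_vector_mult_def sum_distrib_left mult_ac)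

lemma mv_neg: "(A::'a::comm_ring_1^'n^'m) *v (- x) = - (A *v x)"
  by (simp add: vec_eq_iff matrix_vector_mult_def sum_negf)

lemma mv_axis: "((A::'a::comm_ring_1^'n^'m) *v axis i 1) $ r = A$r$i"
  by (simp add: matrix_vector_mult_def axis_def if_distrib cong: if_cong)

definition latrel :: "int^'n^'n \<Rightarrow> ((int^'n) \<times> (int^'n)) set" where
  "latrel B = {(x,y). \<exists>z. x - y = B *v z}"

lemma equiv_latrel: "equiv UNIV (latrel B)"
proof (rule equivI)
  show "refl (latrel B)" unfolding refl_on_def latrel_def
    by (auto intro: exI[of _ 0])
  show "sym (latrel B)" unfolding sym_def latrel_def
  proof (clarsimp)
    fix x y z assume "x - y = B *v z"
    then have "y - x = B *v (- z)" by (simp add: mv_neg) (metis minus_diff_eq)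
    then show "\<exists>z. y - x = B *v z" by blast
  qed
  show "trans (latrel B)" unfolding trans_def latrel_def
  proof (clarsimp)
    fix x y w z1 z2 assume "x - y = B *v z1" "y - w = B *v z2"
    then have "x - w = B *v (z1 + z2)" by (simp add: matrix_vector_right_distrib)
       (metis add.commute diff_add_cancel diff_diff_eq2 add_diff_eq)
    then show "\<exists>z. x - w = B *v z" by blast
  qed
qed simp

definition zi :: "'n \<Rightarrow> int^'n \<Rightarrow> int^'n" where
  "zi i v = (\<chi> k. if k = i then 0 else v$k)"

definition repl :: "int^'n^'n \<Rightarrow> 'n \<Rightarrow> int^'n \<Rightarrow> int^'n^'n" where
  "repl B i w = (\<chi> r c. if c = i then w$r else B$r$c)"

lemma repl_mult: "repl B i w *v v = B *v zi i v + v$i *s w"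
proof -
  have "(repl B i w *v v)$r = (B *v zi i v + v$i *s w)$r" for r
  proof -
    have "(repl B i w *v v)$r = (\<Sum>c\<in>UNIV. (if c = i then w$r else B$r$c) * v$c)"
      by (simp add: matrix_vector_mult_def repl_def)
    also have "\<dots> = (\<Sum>c\<in>UNIV. B$r$c * (if c = i then 0 else v$c) + (if c = i then w$r * v$c else 0))"
      by (rule sum.cong) auto
    also have "\<dots> = (\<Sum>c\<in>UNIV. B$r$c * (if c = i then 0 else v$c)) + w$r * v$i"
      by (simp add: sum.distrib)
    finally show ?thesis by (simp add: matrix_vector_mult_def zi_def mult.commute)
  qed
  then show ?thesis by (simp add: vec_eq_iff)
qed



lemma repl_nth: "repl B i w $ r $ c = (if c = i then w$r else B$r$c)"
  by (simp add: repl_def)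

lemma inj_int_mat:
  fixes B :: "int^'n^'n"
  assumes "det B \<noteq> 0" and "B *v v = B *v v'"
  shows "v = v'"
proof -
  have "inj ((*v) (rmat B))"
    using det_nz_iff_inj[of "(*v) (rmat B)"] assms(1) by (simp add: det_rmat)
  moreover have "rmat B *v rvec v = rmat B *v rvec v'" using assms(2) by (simp add: rmat_mult)
  ultimately show ?thesis by (meson injD rvec_inj)
qed

lemma step_lemma:
  fixes B :: "int^'n^'n"
  assumes p: "p > 1" and ui: "u$i = 1" and dv: "\<And>r. p dvd (B *v u)$r"
  defines "w \<equiv> (\<chi> r. (B *v u)$r div p)"
  shows "det B = p * det (repl B i w)"
    and "latrel B = {(x,y). \<exists>v. x - y = repl B i w *v v \<and> p dvd v$i}"
proof -
  let ?B' = "repl B i w"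
  have pw: "p *s w = B *v u" using dv by (simp add: w_def vec_eq_iff)
  define y where "y = (\<chi> k. if k = i then p else - u$k)"
  have zy: "zi i y + u = axis i 1" using ui by (simp add: vec_eq_iff zi_def y_def axis_def)
  have By: "?B' *v y = B *v axis i 1"
    by (simp add: repl_mult pw y_def flip: zy matrix_vector_right_distrib)
  have Beq: "B = (\<chi> r c. if c = i then (?B' *v y)$r else ?B'$r$c)"
    by (simp add: By mv_axis vec_eq_iff repl_nth)
  have "rmat B = (\<chi> r c. if c = i then (rmat ?B' *v rvec y)$r else rmat ?B'$r$c)"
    by (subst Beq) (simp add: rmat_def vec_eq_iff rvec_def matrix_vector_mult_def)
  then have "det (rmat B) = (rvec y)$i * det (rmat ?B')"
    using cramer_lemma[where A="rmat ?B'" and k=i and x="rvec y"] by simp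
  then have "real_of_int (det B) = real_of_int (p * det ?B')"
    by (simp add: det_rmat rvec_def y_def)
  then show "det B = p * det ?B'" by linarith
  show "latrel B = {(x,y). \<exists>v. x - y = ?B' *v v \<and> p dvd v$i}"
  proof (intro set_eqI iffI)
    fix xy assume "xy \<in> latrel B"
    then obtain x y' z where xy: "xy = (x,y')" and z: "x - y' = B *v z"
      by (auto simp: latrel_def)
    have "zi i (zi i z) = zi i z" by (simp add: zi_def vec_eq_iff)
    have "B *v z = B *v zi i z + z$i *s (B *v axis i 1)"
    proof -
      have "z = zi i z + z$i *s axis i 1" by (simp add: zi_def vec_eq_iff axis_def)
      then show ?thesis by (metis matrix_vector_right_distrib mv_smult)
    qed
    also have "\<dots> = ?B' *v (zi i z + z$i *s y)"
      using \<open>zi i (zi i z) = zi i z\<close>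
      by (simp add: matrix_vector_right_distrib mv_smult By[symmetric] repl_mult zi_def)
    finally have "x - y' = ?B' *v (zi i z + z$i *s y)" using z by simp
    moreover have "p dvd (zi i z + z$i *s y)$i" by (simp add: zi_def y_def)
    ultimately show "xy \<in> {(x,y). \<exists>v. x - y = ?B' *v v \<and> p dvd v$i}" using xy by blast
  next
    fix xy assume "xy \<in> {(x,y). \<exists>v. x - y = ?B' *v v \<and> p dvd v$i}"
    then obtain x y' v a where xy: "xy = (x,y')" and v: "x - y' = ?B' *v v" and a: "v$i = p * a"
      by (auto elim!: dvdE)
    have "?B' *v v = B *v zi i v + a *s (p *s w)"
      by (simp add: repl_mult a vector_smult_assoc mult.commute)
    also have "\<dots> = B *v (zi i v + a *s u)"
      by (simp add: pw matrix_vector_right_distrib mv_smult)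
    finally show "xy \<in> latrel B" using xy v by (auto simp: latrel_def)
  qed
qed

lemma count_lemma:
  fixes B B' :: "int^'n^'n"
  assumes p: "p > 0" and d': "det B' \<noteq> 0"
    and L: "latrel B = {(x,y). \<exists>v. x - y = B' *v v \<and> p dvd v$i}"
    and fin: "finite (UNIV // latrel B')"
  shows "finite (UNIV // latrel B) \<and> card (UNIV // latrel B) = nat p * card (UNIV // latrel B')"
proof -
  let ?R = "latrel B" and ?R' = "latrel B'"
  let ?e = "axis i 1 :: int^'n"
  have eR: "equiv UNIV ?R" and eR': "equiv UNIV ?R'" by (rule equiv_latrel)+
  have sub: "(x,y) \<in> ?R'" if "(x,y) \<in> ?R" for x y
  proof -
    have "(x,y) \<in> {(x,y). \<exists>v. x - y = B' *v v \<and> p dvd v$i}" using that L by simp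
    then show ?thesis by (auto simp: latrel_def)
  qed
  define fib where "fib c' = {c \<in> UNIV // ?R. c \<subseteq> c'}" for c'
  define g where "g x t = ?R `` {x + B' *v (t *s ?e)}" for x t
  have fibeq: "fib (?R' `` {x}) = g x ` {0..<p}" for x
  proof (intro set_eqI iffI)
    fix c assume "c \<in> g x ` {0..<p}"
    then obtain t where c: "c = ?R `` {x + B' *v (t *s ?e)}" by (auto simp: g_def)
    have "(x, x + B' *v (t *s ?e)) \<in> ?R'"
      unfolding latrel_def by (auto simp: mv_neg intro!: exI[of _ "- (t *s ?e)"])
    have trR': "trans ?R'" using eR' by (simp add: equiv_def)
    have "c \<subseteq> ?R' `` {x}"
    proof
      fix y assume "y \<in> c"
      then have "(x + B' *v (t *s ?e), y) \<in> ?R" by (simp add: c)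
      then have "(x + B' *v (t *s ?e), y) \<in> ?R'" by (rule sub)
      with \<open>(x, x + B' *v (t *s ?e)) \<in> ?R'\<close> have "(x, y) \<in> ?R'" by (rule transD[OF trR'])
      then show "y \<in> ?R' `` {x}" by simp
    qed
    then show "c \<in> fib (?R' `` {x})" by (simp add: fib_def c quotientI)
  next
    fix c assume "c \<in> fib (?R' `` {x})"
    then have cq: "c \<in> UNIV // ?R" and cs: "c \<subseteq> ?R' `` {x}" by (auto simp: fib_def)
    then obtain y where cy: "c = ?R `` {y}" by (auto elim: quotientE)
    have "y \<in> c" using cy eR by (auto simp: equiv_def refl_on_def)
    then have "(x,y) \<in> ?R'" using cs by auto
    then obtain v where v: "x - y = B' *v v" by (auto simp: latrel_def)
    define t where "t = (- v$i) mod p"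
    have t: "t \<in> {0..<p}" using p by (simp add: t_def)
    have "B' *v (v + t *s ?e) = (x - y) + B' *v (t *s ?e)" by (simp add: matrix_vector_right_distrib v)
    then have "x + B' *v (t *s ?e) - y = B' *v (v + t *s ?e)" by (simp add: diff_add_eq)
    moreover have "p dvd (v + t *s ?e)$i"
    proof -
      have "(v + t *s ?e)$i = v$i + (- v$i) mod p" by (simp add: t_def axis_def)
      also have "\<dots> = - p * ((- v$i) div p)"
      proof -
        have m: "(- v$i) mod p = - v$i - (- v$i) div p * p" by (rule minus_div_mult_eq_mod[symmetric])
        show ?thesis unfolding m by simp
      qed
      finally show ?thesis by simp
    qed
    ultimately have "(x + B' *v (t *s ?e), y) \<in> ?R" using L by blast
    then have "c = g x t" unfolding cy g_def using eR by (simp add: equiv_class_eq)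
    then show "c \<in> g x ` {0..<p}" using t by blast
  qed
  have inj: "inj_on (g x) {0..<p}" for x
  proof
    fix t s assume ts: "t \<in> {0..<p}" "s \<in> {0..<p}" and "g x t = g x s"
    then have "(x + B' *v (t *s ?e), x + B' *v (s *s ?e)) \<in> ?R"
      unfolding g_def using eq_equiv_class_iff[OF eR] by blast
    then obtain v where v: "x + B' *v (t *s ?e) - (x + B' *v (s *s ?e)) = B' *v v" and pv: "p dvd v$i"
      using L by blast
    have "(t - s) *s ?e = t *s ?e - s *s ?e" by (simp add: vec_eq_iff algebra_simps)
    then have "B' *v ((t - s) *s ?e) = B' *v (t *s ?e) - B' *v (s *s ?e)"
      by (simp add: matrix_vector_mult_diff_distrib)
    then have "B' *v ((t - s) *s ?e) = B' *v v" using v by simp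
    then have "(t - s) *s ?e = v" by (rule inj_int_mat[OF d'])
    then have "p dvd (t - s)" using pv by (metis axis_nth vector_smult_component mult.right_neutral)
    then obtain k where k: "t - s = p * k" by (elim dvdE)
    have e1: "p * (-1) = - p" "p * 1 = p" by simp_all
    have ts': "0 \<le> t" "t < p" "0 \<le> s" "s < p" using ts by auto
    have a1: "p * k < p * 1" using k ts' unfolding e1 by linarith
    have a2: "p * (-1) < p * k" using k ts' unfolding e1 by linarith
    have "k < 1" using a1 mult_less_cancel_left_pos[OF p, of k 1] by blast
    moreover have "-1 < k" using a2 mult_less_cancel_left_pos[OF p, of "-1" k] by blast
    ultimately have "k = 0" by simp
    then show "t = s" using k by simp
  qed
  have cardfib: "finite (fib c') \<and> card (fib c') = nat p" if c'q: "c' \<in> UNIV // ?R'" for c'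
  proof -
    obtain x where "c' = ?R' `` {x}" using c'q unfolding quotient_def by blast
    then have "fib c' = g x ` {0..<p}" by (simp add: fibeq)
    then show ?thesis using card_image[OF inj[of x]] by simp
  qed
  have Gun: "UNIV // ?R = \<Union> (fib ` (UNIV // ?R'))"
  proof (intro set_eqI iffI)
    fix c assume c: "c \<in> UNIV // ?R"
    then obtain y where cy: "c = ?R `` {y}" by (auto elim: quotientE)
    have "c \<subseteq> ?R' `` {y}" using cy sub by auto
    then show "c \<in> \<Union> (fib ` (UNIV // ?R'))" using c by (auto simp: fib_def intro!: quotientI)
  qed (auto simp: fib_def)
  have disj: "\<forall>c1\<in>UNIV // ?R'. \<forall>c2\<in>UNIV // ?R'. c1 \<noteq> c2 \<longrightarrow> fib c1 \<inter> fib c2 = {}"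
  proof (intro ballI impI)
    fix c1 c2 assume c12: "c1 \<in> UNIV // ?R'" "c2 \<in> UNIV // ?R'" "c1 \<noteq> c2"
    show "fib c1 \<inter> fib c2 = {}"
    proof (rule ccontr)
      assume "fib c1 \<inter> fib c2 \<noteq> {}"
      then obtain c where "c \<in> UNIV // ?R" "c \<subseteq> c1" "c \<subseteq> c2" by (auto simp: fib_def)
      moreover have "c \<noteq> {}" using in_quotient_imp_non_empty[OF eR] \<open>c \<in> UNIV // ?R\<close> by blast
      ultimately have "c1 \<inter> c2 \<noteq> {}" by blast
      then show False using quotient_disj[OF eR' c12(1,2)] c12(3) by blast
    qed
  qed
  have "finite (UNIV // ?R)" unfolding Gun using fin cardfib by blast
  moreover have "card (UNIV // ?R) = (\<Sum>c'\<in>UNIV // ?R'. card (fib c'))"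
    unfolding Gun by (rule card_UN_disjoint[OF fin]) (use cardfib disj in blast)+
  moreover have "\<dots> = nat p * card (UNIV // ?R')" using cardfib by simp
  ultimately show ?thesis by simp
qed



lemma find_kernel:
  fixes B :: "int^'n^'n"
  assumes d: "det B \<noteq> 0" and d1: "\<bar>det B\<bar> \<noteq> 1"
  shows "\<exists>p i u. prime p \<and> u$i = 1 \<and> (\<forall>r. p dvd (B *v u)$r)"
proof -
  define a where "a c = cr B (axis c 1)" for c
  have Ba: "B *v a c = det B *s axis c 1" for c using adj_int[OF d] by (simp add: a_def)
  define S where "S = {a c $ r | c r. True}"
  define g where "g = Gcd S"
  have gdv: "g dvd a c $ r" for c r unfolding g_def S_def by (rule Gcd_dvd) blast
  obtain c0 :: 'n where True by blast
  have g0: "g \<noteq> 0"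
  proof
    assume "g = 0"
    then have "a c0 = 0" using gdv by (simp add: vec_eq_iff)
    then have "det B *s axis c0 1 = (0::int^'n)" using Ba[of c0] by simp
    then have "(det B *s axis c0 1 :: int^'n) $ c0 = 0" by simp
    then show False using d by (simp add: axis_def)
  qed
  define a' where "a' c = (\<chi> r. a c $ r div g)" for c
  have ga': "g *s a' c = a c" for c using gdv by (simp add: a'_def vec_eq_iff)
  have gd: "g dvd det B"
  proof -
    have "det B = (B *v a c0) $ c0" using Ba by (simp add: axis_def)
    also have "\<dots> = (\<Sum>k\<in>UNIV. B$c0$k * a c0 $ k)" by (simp add: matrix_vector_mult_def)
    finally show ?thesis using gdv by (simp add: dvd_sum)
  qed
  then obtain q where q: "det B = g * q" by (elim dvdE)
  have Ba': "B *v a' c = q *s axis c 1" for c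
  proof -
    have "g *s (B *v a' c) = g *s (q *s axis c 1)"
      using Ba[of c] by (simp add: mv_smult[symmetric] ga' q vector_smult_assoc)
    then show ?thesis using g0 by (simp add: vec_eq_iff)
  qed
  have q1: "\<not> is_unit q"
  proof
    assume u: "is_unit q"
    then obtain q' where "1 = q * q'" by (elim dvdE)
    then have "q = 1 \<or> q = -1" using pos_zmult_eq_1_iff_lemma by metis
    then have qq: "q * q = 1" by auto
    define A where "A = (\<chi> r c. q * a' c $ r)"
    have "B ** A = mat 1"
    proof -
      have "(B ** A)$r$c = q * (B *v a' c)$r" for r c
        by (simp add: matrix_matrix_mult_def matrix_vector_mult_def A_def sum_distrib_left mult_ac)
      then show ?thesis using qq by (simp add: vec_eq_iff Ba' mat_def axis_def)
    qed
    then have "det B * det A = 1" by (metis det_I det_mul)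
    then have "\<bar>det B\<bar> = 1" using pos_zmult_eq_1_iff_lemma by fastforce
    then show False using d1 by simp
  qed
  have "q \<noteq> 0" using d q by auto
  then obtain p where p: "prime p" "p dvd q" using prime_divisor_exists q1 by blast
  have "\<exists>c r. \<not> p dvd a' c $ r"
  proof (rule ccontr)
    assume "\<not> ?thesis"
    then have "p * g dvd x" if "x \<in> S" for x using that ga'
      by (auto simp: S_def vec_eq_iff) (metis mult_dvd_mono dvd_refl mult.commute)
    then have "p * g dvd g" unfolding g_def by (rule Gcd_greatest)
    then have "p dvd 1" using g0 by (metis dvd_mult_cancel_right mult_1)
    then show False using p(1) not_prime_unit by blast
  qed
  then obtain c i where ci: "\<not> p dvd a' c $ i" by blast
  have "coprime (a' c $ i) p" using ci p(1) by (simp add: prime_imp_coprime coprime_commute)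
  then obtain s t where st: "s * a' c $ i + t * p = 1" using bezout_int[of "a' c $ i" p] by auto
  define u where "u = s *s a' c + (1 - s * a' c $ i) *s axis i 1"
  have "u$i = 1" by (simp add: u_def axis_def)
  moreover have "p dvd (B *v u)$r" for r
  proof -
    have 1: "B *v u = s *s (q *s axis c 1) + (1 - s * a' c $ i) *s (B *v axis i 1)"
      by (simp add: u_def matrix_vector_right_distrib matrix_vector_mult_diff_distrib mv_smult Ba')
    have 2: "1 - s * a' c $ i = t * p" using st by linarith
    obtain q' where q': "q = p * q'" using p(2) by (elim dvdE)
    have "(B *v u)$r = p * (s * q' * axis c 1 $ r + t * B$r$i)"
      unfolding 1 2 q' by (simp add: mv_axis algebra_simps)
    then show ?thesis by simp
  qed
  ultimately show ?thesis using p(1) by blast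
qed

lemma index_main:
  fixes B :: "int^'n^'n"
  shows "det B \<noteq> 0 \<Longrightarrow> finite (UNIV // latrel B) \<and> card (UNIV // latrel B) = nat \<bar>det B\<bar>"
proof (induction "nat \<bar>det B\<bar>" arbitrary: B rule: less_induct)
  case less
  show ?case
  proof (cases "\<bar>det B\<bar> = 1")
    case True
    then have "det B = 1 \<or> det B = -1" by linarith
    then have dd: "det B * det B = 1" by auto
    have "latrel B = UNIV"
    proof -
      have "(x,y) \<in> latrel B" for x y
      proof -
        have "B *v (det B *s cr B (x - y)) = x - y"
          using adj_int[OF less.prems, of "x - y"] by (simp only: mv_smult vector_smult_assoc dd vector_smult_lid)
        then have "\<exists>z. x - y = B *v z" by (intro exI[of _ "det B *s cr B (x - y)"]) simp
        then show ?thesis unfolding latrel_def by simp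
      qed
      then show ?thesis by auto
    qed
    then have "UNIV // latrel B = {UNIV}" unfolding quotient_def by auto
    then show ?thesis using True by simp
  next
    case False
    obtain p i u where p: "prime p" and ui: "u$i = 1" and dv: "\<forall>r. p dvd (B *v u)$r"
      using find_kernel[OF less.prems False] by blast
    have p1: "p > 1" using p by (simp add: prime_gt_1_int)
    define w where "w = (\<chi> r. (B *v u)$r div p)"
    have dvr: "\<And>r. p dvd (B *v u)$r" using dv by blast
    note st = step_lemma[OF p1 ui dvr, folded w_def]
    have dB: "det B = p * det (repl B i w)" by (rule st(1))
    have LB: "latrel B = {(x,y). \<exists>v. x - y = repl B i w *v v \<and> p dvd v$i}" by (rule st(2))
    have d': "det (repl B i w) \<noteq> 0" using dB less.prems by auto
    have "\<bar>det B\<bar> = p * \<bar>det (repl B i w)\<bar>" using dB p1 by (simp add: abs_mult)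
    moreover have "1 * \<bar>det (repl B i w)\<bar> < p * \<bar>det (repl B i w)\<bar>"
      using p1 d' by (intro mult_strict_right_mono) auto
    ultimately have lt: "nat \<bar>det (repl B i w)\<bar> < nat \<bar>det B\<bar>" by simp
    have IH: "finite (UNIV // latrel (repl B i w)) \<and> card (UNIV // latrel (repl B i w)) = nat \<bar>det (repl B i w)\<bar>"
      using less.hyps[OF lt d'] .
    have "finite (UNIV // latrel B) \<and> card (UNIV // latrel B) = nat p * card (UNIV // latrel (repl B i w))"
      using count_lemma[OF _ d' LB] IH p1 by linarith
    moreover have "nat p * nat \<bar>det (repl B i w)\<bar> = nat \<bar>det B\<bar>"
      using \<open>\<bar>det B\<bar> = p * \<bar>det (repl B i w)\<bar>\<close> p1 by (simp add: nat_mult_distrib)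
    ultimately show ?thesis using IH by simp
  qed
qed



definition sg :: "int^'n \<Rightarrow> int^'n \<Rightarrow> int^'n" where
  "sg b x = - x - b"

lemma R_refl: "(x,x) \<in> latrel B"
  using equiv_latrel[of B] by (auto simp: equiv_def refl_on_def)
lemma R_sym: "(x,y) \<in> latrel B \<Longrightarrow> (y,x) \<in> latrel B"
  using equiv_latrel[of B] by (auto simp: equiv_def dest: symD)
lemma R_trans: "(x,y) \<in> latrel B \<Longrightarrow> (y,w) \<in> latrel B \<Longrightarrow> (x,w) \<in> latrel B"
  using equiv_latrel[of B] by (auto simp: equiv_def dest: transD)

lemma R_sg_swap: "(sg b x, y) \<in> latrel B \<longleftrightarrow> (sg b y, x) \<in> latrel B"
proof -
  have "sg b x - y = sg b y - x" by (simp add: sg_def algebra_simps)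
  then show ?thesis by (simp add: latrel_def)
qed

lemma R_sg: "(x,y) \<in> latrel B \<Longrightarrow> (sg b x, sg b y) \<in> latrel B"
proof -
  assume "(x,y) \<in> latrel B"
  then obtain z where "x - y = B *v z" by (auto simp: latrel_def)
  then have "sg b x - sg b y = B *v (- z)" by (simp add: sg_def mv_neg algebra_simps)
  then show ?thesis by (auto simp: latrel_def)
qed

lemma S_iff: "(x,y) \<in> sim_rel B b \<longleftrightarrow> (x,y) \<in> latrel B \<or> (sg b x, y) \<in> latrel B"
proof -
  have "(\<exists>z. x + y + b = B *v z) \<longleftrightarrow> (\<exists>z. sg b x - y = B *v z)"
  proof
    assume "\<exists>z. x + y + b = B *v z"
    then obtain z where "x + y + b = B *v z" by blast
    then have "sg b x - y = B *v (- z)" by (simp add: sg_def mv_neg algebra_simps)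
    then show "\<exists>z. sg b x - y = B *v z" by blast
  next
    assume "\<exists>z. sg b x - y = B *v z"
    then obtain z where "sg b x - y = B *v z" by blast
    moreover have "x + y + b = - (sg b x - y)" by (simp add: sg_def algebra_simps)
    ultimately have "x + y + b = B *v (- z)" by (simp add: mv_neg)
    then show "\<exists>z. x + y + b = B *v z" by blast
  qed
  then show ?thesis by (auto simp: sim_rel_def latrel_def)
qed

lemma equiv_S: "equiv UNIV (sim_rel B b)"
proof (rule equivI)
  show "refl (sim_rel B b)" unfolding refl_on_def using R_refl S_iff by blast
  show "sym (sim_rel B b)" unfolding sym_def using R_sym R_sg_swap S_iff by blast
  show "trans (sim_rel B b)" unfolding trans_def
  proof (intro allI impI)
    fix x y w assume "(x,y) \<in> sim_rel B b" "(y,w) \<in> sim_rel B b"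
    then have a: "(x,y) \<in> latrel B \<or> (sg b x, y) \<in> latrel B" and c: "(y,w) \<in> latrel B \<or> (sg b y, w) \<in> latrel B"
      by (simp_all add: S_iff)
    show "(x,w) \<in> sim_rel B b"
      unfolding S_iff using a c R_trans R_sg R_sym R_sg_swap by meson
  qed
qed simp

lemma R_class_eq: "(x,y) \<in> latrel B \<Longrightarrow> latrel B `` {x} = latrel B `` {y}"
  using equiv_class_eq[OF equiv_latrel] .

lemma sim_count:
  fixes B :: "int^'n^'n" and b :: "int^'n"
  assumes fin: "finite (UNIV // latrel B)"
  defines "Fix \<equiv> {c \<in> UNIV // latrel B. \<forall>x\<in>c. (x, sg b x) \<in> latrel B}"
  shows "finite (UNIV // sim_rel B b) \<and>
         card (UNIV // latrel B) + card Fix = 2 * card (UNIV // sim_rel B b)"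
proof -
  let ?R = "latrel B" and ?S = "sim_rel B b"
  let ?G = "UNIV // ?R" and ?Q = "UNIV // ?S"
  have eR: "equiv UNIV ?R" by (rule equiv_latrel)
  have eS: "equiv UNIV ?S" by (rule equiv_S)
  define fib where "fib q = {c \<in> ?G. c \<subseteq> q}" for q
  have Sx: "?S `` {x} = ?R `` {x} \<union> ?R `` {sg b x}" for x
    by (rule set_eqI) (simp add: S_iff)
  have fibx: "fib (?S `` {x}) = {?R `` {x}, ?R `` {sg b x}}" for x
  proof (intro set_eqI iffI)
    fix c assume "c \<in> fib (?S `` {x})"
    then have cG: "c \<in> ?G" and cs: "c \<subseteq> ?S `` {x}" by (auto simp: fib_def)
    then obtain y where cy: "c = ?R `` {y}" unfolding quotient_def by blast
    have "y \<in> c" using cy R_refl by auto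
    then have "(x,y) \<in> ?R \<or> (sg b x, y) \<in> ?R" using cs Sx by auto
    then show "c \<in> {?R `` {x}, ?R `` {sg b x}}" using cy R_class_eq by blast
  next
    fix c assume "c \<in> {?R `` {x}, ?R `` {sg b x}}"
    then show "c \<in> fib (?S `` {x})" using Sx by (auto simp: fib_def quotientI)
  qed
  have cnt: "card (fib q) + card (Fix \<inter> fib q) = 2" if "q \<in> ?Q" for q
  proof -
    obtain x where qx: "q = ?S `` {x}" using \<open>q \<in> ?Q\<close> unfolding quotient_def by blast
    show ?thesis
    proof (cases "(x, sg b x) \<in> ?R")
      case True
      then have eq: "?R `` {x} = ?R `` {sg b x}" by (rule R_class_eq)
      have "?R `` {x} \<in> Fix"
      proof -
        have "(y, sg b y) \<in> ?R" if "y \<in> ?R `` {x}" for y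
        proof -
          from that have xy: "(x,y) \<in> ?R" by simp
          then obtain z where z: "x - y = B *v z" by (auto simp: latrel_def)
          from True obtain z' where z': "x - sg b x = B *v z'" by (auto simp: latrel_def)
          have "y - sg b y = (x - sg b x) - 2 *s (x - y)" by (simp add: sg_def vec_eq_iff algebra_simps)
          also have "\<dots> = B *v (z' - 2 *s z)" by (simp add: z z' mv_smult matrix_vector_mult_diff_distrib)
          finally show ?thesis by (auto simp: latrel_def)
        qed
        then show ?thesis by (auto simp: Fix_def quotientI)
      qed
      then show ?thesis unfolding qx fibx eq by simp
    next
      case False
      have ne: "?R `` {x} \<noteq> ?R `` {sg b x}"
        using False eq_equiv_class_iff[OF eR] by blast
      have n1: "?R `` {x} \<notin> Fix" using False R_refl by (auto simp: Fix_def)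
      have "(sg b x, sg b (sg b x)) \<notin> ?R"
      proof
        assume "(sg b x, sg b (sg b x)) \<in> ?R"
        moreover have "sg b (sg b x) = x" by (simp add: sg_def)
        ultimately have "(sg b x, x) \<in> ?R" by simp
        then have "(x, sg b x) \<in> ?R" by (rule R_sym)
        then show False using False by contradiction
      qed
      then have n2: "?R `` {sg b x} \<notin> Fix" using R_refl by (auto simp: Fix_def)
      have "Fix \<inter> fib q = {}" unfolding qx fibx using n1 n2 by auto
      then show ?thesis unfolding qx fibx using ne by simp
    qed
  qed
  have fibne: "fib q \<noteq> {}" if "q \<in> ?Q" for q
    using that fibx unfolding quotient_def by blast
  have disj: "fib q1 \<inter> fib q2 = {}" if "q1 \<in> ?Q" "q2 \<in> ?Q" "q1 \<noteq> q2" for q1 q2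
  proof (rule ccontr)
    assume "fib q1 \<inter> fib q2 \<noteq> {}"
    then obtain c where "c \<in> ?G" "c \<subseteq> q1" "c \<subseteq> q2" by (auto simp: fib_def)
    moreover have "c \<noteq> {}" using in_quotient_imp_non_empty[OF eR] \<open>c \<in> ?G\<close> by blast
    ultimately have "q1 \<inter> q2 \<noteq> {}" by blast
    then show False using quotient_disj[OF eS that(1,2)] that(3) by blast
  qed
  have Gun: "?G = \<Union> (fib ` ?Q)"
  proof (intro set_eqI iffI)
    fix c assume c: "c \<in> ?G"
    then obtain y where cy: "c = ?R `` {y}" unfolding quotient_def by blast
    have "c \<in> fib (?S `` {y})" using fibx cy by blast
    then show "c \<in> \<Union> (fib ` ?Q)" by (auto intro: quotientI)
  qed (auto simp: fib_def)
  have injf: "inj_on fib ?Q"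
  proof
    fix q1 q2 assume "q1 \<in> ?Q" "q2 \<in> ?Q" "fib q1 = fib q2"
    then show "q1 = q2" using disj[of q1 q2] fibne[of q1] by auto
  qed
  have "fib ` ?Q \<subseteq> Pow ?G" by (auto simp: fib_def)
  then have "finite (fib ` ?Q)" using fin by (meson finite_Pow_iff finite_subset)
  then have finQ: "finite ?Q" using injf finite_imageD by blast
  have finfib: "finite (fib q)" for q using fin by (simp add: fib_def)
  have A1: "\<forall>q\<in>?Q. finite (fib q)" using finfib by blast
  have A2: "\<forall>q1\<in>?Q. \<forall>q2\<in>?Q. q1 \<noteq> q2 \<longrightarrow> fib q1 \<inter> fib q2 = {}" using disj by blast
  have A3: "\<forall>q\<in>?Q. finite (Fix \<inter> fib q)" using finfib by blast
  have A4: "\<forall>q1\<in>?Q. \<forall>q2\<in>?Q. q1 \<noteq> q2 \<longrightarrow> (Fix \<inter> fib q1) \<inter> (Fix \<inter> fib q2) = {}"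
    using disj by blast
  have c1: "card ?G = (\<Sum>q\<in>?Q. card (fib q))"
    using card_UN_disjoint[OF finQ A1 A2] Gun by simp
  have "Fix \<subseteq> ?G" by (auto simp: Fix_def)
  then have FixU: "Fix = \<Union> ((\<lambda>q. Fix \<inter> fib q) ` ?Q)" using Gun by blast
  have c2: "card Fix = (\<Sum>q\<in>?Q. card (Fix \<inter> fib q))"
    using card_UN_disjoint[OF finQ A3 A4] FixU by simp
  have "card ?G + card Fix = (\<Sum>q\<in>?Q. card (fib q) + card (Fix \<inter> fib q))"
    by (simp add: c1 c2 sum.distrib)
  also have "\<dots> = (\<Sum>q\<in>?Q. 2)" using cnt by (intro sum.cong) auto
  finally show ?thesis using finQ by simp
qed



definition lift :: "bit^'n \<Rightarrow> int^'n" where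
  "lift y = (\<chi> k. if y$k = 0 then 0 else 1)"
definition half :: "int^'n \<Rightarrow> int^'n" where
  "half v = (\<chi> k. v$k div 2)"

lemma vm2_mult: "vec_mod2 (A *v v) = mat_mod2 A *v vec_mod2 v"
  by (simp add: vec_eq_iff vec_mod2_def mat_mod2_def matrix_vector_mult_def)

lemma vm2_lift: "vec_mod2 (lift y) = y"
proof -
  have "(if y$k = 0 then 0 else 1 :: bit) = y$k" for k by (cases "y$k") auto
  then show ?thesis by (simp add: vec_eq_iff vec_mod2_def lift_def)
qed

lemma vm2_diff: "vec_mod2 (u - v) = vec_mod2 u - vec_mod2 v"
  by (simp add: vec_eq_iff vec_mod2_def)
lemma vm2_add: "vec_mod2 (u + v) = vec_mod2 u + vec_mod2 v"
  by (simp add: vec_eq_iff vec_mod2_def)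
lemma vm2_zero_iff: "vec_mod2 v = 0 \<longleftrightarrow> (\<forall>k. even (v$k))"
  by (simp add: vec_eq_iff vec_mod2_def bit_of_int_0)
lemma vm2_2: "vec_mod2 (2 *s v) = 0"
  by (simp add: vm2_zero_iff)
lemma half_2: "(\<forall>k. even (v$k)) \<Longrightarrow> 2 *s half v = v"
  by (simp add: vec_eq_iff half_def)
lemma half_2': "half (2 *s v) = v"
  by (simp add: vec_eq_iff half_def)
lemma lift_mod: "lift (vec_mod2 z) = (\<chi> k. z$k mod 2)"
  by (simp add: vec_eq_iff lift_def vec_mod2_def bit_of_int_0 even_iff_mod_2_eq_zero odd_iff_mod_2_eq_one)
lemma z_split: "z = lift (vec_mod2 z) + 2 *s half z"
  by (simp add: lift_mod vec_eq_iff half_def)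

lemma fix_count:
  fixes B :: "int^'n^'n" and b :: "int^'n"
  assumes d: "det B \<noteq> 0"
  shows "card {c \<in> UNIV // latrel B. \<forall>x\<in>c. (x, sg b x) \<in> latrel B} = O_count B b"
proof -
  let ?R = "latrel B"
  define Fix where "Fix = {c \<in> UNIV // ?R. \<forall>x\<in>c. (x, sg b x) \<in> ?R}"
  define sols where "sols = {y :: bit^'n. mat_mod2 B *v y = vec_mod2 b}"
  define xo where "xo y = half (B *v lift y - b)" for y
  define psi where "psi y = ?R `` {xo y}" for y
  have xo2: "2 *s xo y = B *v lift y - b" if "y \<in> sols" for y
  proof -
    have "vec_mod2 (B *v lift y - b) = 0"
      using that by (simp add: sols_def vm2_diff vm2_mult vm2_lift)
    then show ?thesis unfolding xo_def by (intro half_2) (simp add: vm2_zero_iff)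
  qed
  have inj: "inj_on psi sols"
  proof
    fix y1 y2 assume y: "y1 \<in> sols" "y2 \<in> sols" and "psi y1 = psi y2"
    then have "(xo y1, xo y2) \<in> ?R" unfolding psi_def using eq_equiv_class_iff[OF equiv_latrel] by blast
    then obtain z where z: "xo y1 - xo y2 = B *v z" by (auto simp: latrel_def)
    have "B *v (lift y1 - lift y2) = 2 *s xo y1 - 2 *s xo y2"
      using xo2[OF y(1)] xo2[OF y(2)] by (simp add: matrix_vector_mult_diff_distrib)
    also have "\<dots> = B *v (2 *s z)"
      by (simp add: mv_smult z[symmetric] vector_ssub_ldistrib)
    finally have "lift y1 - lift y2 = 2 *s z" by (rule inj_int_mat[OF d])
    then have "vec_mod2 (lift y1 - lift y2) = 0" by (simp add: vm2_2)
    then show "y1 = y2" by (simp add: vm2_diff vm2_lift)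
  qed
  have img: "psi ` sols = Fix"
  proof (intro set_eqI iffI)
    fix c assume "c \<in> psi ` sols"
    then obtain y where y: "y \<in> sols" and c: "c = ?R `` {xo y}" by (auto simp: psi_def)
    have "(x', sg b x') \<in> ?R" if "x' \<in> c" for x'
    proof -
      from that c obtain z where z: "xo y - x' = B *v z" by (auto simp: latrel_def)
      have "x' - sg b x' = (2 *s xo y + b) - 2 *s (xo y - x')"
        by (simp add: sg_def vec_eq_iff algebra_simps)
      also have "\<dots> = B *v (lift y - 2 *s z)"
        by (simp add: xo2[OF y] z mv_smult matrix_vector_mult_diff_distrib)
      finally show ?thesis by (auto simp: latrel_def)
    qed
    then show "c \<in> Fix" by (simp add: Fix_def c quotientI)
  next
    fix c assume "c \<in> Fix"
    then have cG: "c \<in> UNIV // ?R" and cf: "\<forall>x\<in>c. (x, sg b x) \<in> ?R" by (auto simp: Fix_def)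
    then obtain x where cx: "c = ?R `` {x}" unfolding quotient_def by blast
    have "x \<in> c" using cx R_refl by auto
    then obtain z where z: "x - sg b x = B *v z" using cf by (auto simp: latrel_def)
    define y where "y = vec_mod2 z"
    have xs: "x - sg b x = 2 *s x + b" by (simp add: sg_def vec_eq_iff algebra_simps)
    have "y \<in> sols"
      unfolding sols_def y_def by (simp add: vm2_mult[symmetric] z[symmetric] xs vm2_add vm2_2)
    have "B *v lift y - b = B *v z - 2 *s (B *v half z) - b"
      using z_split[of z] unfolding y_def
      by (metis add_diff_cancel_right' matrix_vector_mult_diff_distrib mv_smult)
    also have "\<dots> = 2 *s (x - B *v half z)"
      unfolding z[symmetric] xs by (simp add: vec_eq_iff algebra_simps)
    finally have "B *v lift y - b = 2 *s (x - B *v half z)" .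
    then have "xo y = x - B *v half z" unfolding xo_def by (simp only: half_2')
    then have "(x, xo y) \<in> ?R" by (auto simp: latrel_def)
    then have "psi y = c" unfolding psi_def cx using R_class_eq R_sym by metis
    then show "c \<in> psi ` sols" using \<open>y \<in> sols\<close> by blast
  qed
  have "card Fix = card sols" using card_image[OF inj] img by simp
  then show ?thesis by (simp add: Fix_def sols_def O_count_def)
qed



lemma det0_infinite:
  fixes B :: "int^'n^'n" and b :: "int^'n"
  assumes d: "det B = 0"
  shows "infinite (UNIV // sim_rel B b)"
proof
  assume finQ: "finite (UNIV // sim_rel B b)"
  let ?S = "sim_rel B b"
  define At where "At = transpose (rmat B)"
  have "det At = 0" using d by (simp add: At_def det_rmat)
  then have "\<not> inj ((*v) At)"
    using det_nz_iff_inj[of "(*v) At"] by simp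
  then obtain c where c0: "c \<noteq> 0" and cA: "At *v c = 0"
    using linear_injective_0[of "(*v) At"] by auto
  then obtain i where ci: "c$i \<noteq> 0" by (auto simp: vec_eq_iff)
  define g where "g v = (\<Sum>r\<in>UNIV. c$r * v$r)" for v :: "real^'n"
  have gB: "g (rvec (B *v z)) = 0" for z
  proof -
    have "g (rvec (B *v z)) = (\<Sum>r\<in>UNIV. \<Sum>j\<in>UNIV. c$r * (real_of_int (B$r$j) * real_of_int (z$j)))"
      by (simp add: g_def rvec_def matrix_vector_mult_def sum_distrib_left)
    also have "\<dots> = (\<Sum>j\<in>UNIV. (\<Sum>r\<in>UNIV. real_of_int (B$r$j) * c$r) * real_of_int (z$j))"
      by (subst sum.swap) (simp add: sum_distrib_right sum_distrib_left mult_ac)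
    also have "\<dots> = (\<Sum>j\<in>UNIV. (At *v c)$j * real_of_int (z$j))"
      by (simp add: At_def transpose_def rmat_def matrix_vector_mult_def)
    finally show ?thesis using cA by simp
  qed
  have gadd: "g (rvec (x + y)) = g (rvec x) + g (rvec y)" for x y
    by (simp add: g_def rvec_def distrib_left sum.distrib)
  have gsub: "g (rvec (x - y)) = g (rvec x) - g (rvec y)" for x y
    by (simp add: g_def rvec_def right_diff_distrib sum_subtractf)
  have key: "g (rvec x) = g (rvec y) \<or> g (rvec x) + g (rvec y) + g (rvec b) = 0"
    if xyS: "(x,y) \<in> ?S" for x y
  proof -
    obtain z where "x - y = B *v z \<or> x + y + b = B *v z" using xyS unfolding sim_rel_def by blast
    then show ?thesis
    proof
      assume "x - y = B *v z"
      then have "g (rvec (x - y)) = 0" using gB by simp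
      then show ?thesis by (simp add: gsub)
    next
      assume "x + y + b = B *v z"
      then have "g (rvec (x + y + b)) = 0" using gB by simp
      then show ?thesis by (simp add: gadd)
    qed
  qed
  define xm where "xm m = (\<chi> k. if k = i then int m else 0)" for m :: nat
  have gxm: "g (rvec (xm m)) = c$i * real m" for m
  proof -
    have "g (rvec (xm m)) = (\<Sum>r\<in>UNIV. if r = i then c$i * real m else 0)"
      unfolding g_def rvec_def xm_def by (intro sum.cong) auto
    then show ?thesis by simp
  qed
  have finrel: "finite {m. (xm m0, xm m) \<in> ?S}" for m0
  proof -
    define r where "r = - (g (rvec b) + c$i * real m0) / c$i"
    have "{m. (xm m0, xm m) \<in> ?S} \<subseteq> {m0, nat \<lfloor>r\<rfloor>}"
    proof
      fix m assume "m \<in> {m. (xm m0, xm m) \<in> ?S}"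
      then have "(xm m0, xm m) \<in> ?S" by simp
      from key[OF this] have "c$i * real m0 = c$i * real m \<or> c$i * real m0 + c$i * real m + g (rvec b) = 0"
        by (simp only: gxm)
      then have "m = m0 \<or> real m = r" using ci by (auto simp: r_def field_simps)
      then show "m \<in> {m0, nat \<lfloor>r\<rfloor>}" by auto
    qed
    then show ?thesis by (rule finite_subset) simp
  qed
  define f where "f m = ?S `` {xm m}" for m
  have fQ: "f ` UNIV \<subseteq> UNIV // ?S" by (auto simp: f_def quotientI)
  have "finite (f ` UNIV)" using finite_subset[OF fQ finQ] .
  moreover have "finite (f -` {q})" if qf: "q \<in> f ` UNIV" for q
  proof -
    obtain m0 where q: "q = f m0" using qf by blast
    have "f -` {q} \<subseteq> {m. (xm m0, xm m) \<in> ?S}"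
    proof
      fix m assume "m \<in> f -` {q}"
      then have "f m = f m0" using q by simp
      moreover have "xm m \<in> f m" using equiv_S[of B b] by (auto simp: f_def equiv_def refl_on_def)
      ultimately show "m \<in> {m. (xm m0, xm m) \<in> ?S}" by (simp add: f_def)
    qed
    then show ?thesis using finrel finite_subset by blast
  qed
  ultimately have "finite (\<Union>q\<in>f ` UNIV. f -` {q})" by blast
  moreover have "(\<Union>q\<in>f ` UNIV. f -` {q}) = (UNIV :: nat set)" by auto
  ultimately show False by simp
qed

theorem lemma5p10:
  fixes B :: "int^'n^'n" and b :: "int^'n"
  shows "equiv UNIV (sim_rel B b) \<and>
         (det B = 0 \<longrightarrow> infinite (UNIV // sim_rel B b)) \<and>
         (det B \<noteq> 0 \<longrightarrow> finite (UNIV // sim_rel B b) \<and>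
            real (card (UNIV // sim_rel B b)) = (real_of_int \<bar>det B\<bar> + real (O_count B b)) / 2)"
proof (intro conjI impI)
  show "equiv UNIV (sim_rel B b)" by (rule equiv_S)
  show "det B = 0 \<Longrightarrow> infinite (UNIV // sim_rel B b)" by (rule det0_infinite)
  assume d: "det B \<noteq> 0"
  have G: "finite (UNIV // latrel B)" "card (UNIV // latrel B) = nat \<bar>det B\<bar>"
    using index_main[OF d] by auto
  have Q: "finite (UNIV // sim_rel B b)"
    "card (UNIV // latrel B) + card {c \<in> UNIV // latrel B. \<forall>x\<in>c. (x, sg b x) \<in> latrel B} =
     2 * card (UNIV // sim_rel B b)"
    using sim_count[OF G(1), of b] by auto
  show "finite (UNIV // sim_rel B b)" by (rule Q(1))
  have "nat \<bar>det B\<bar> + O_count B b = 2 * card (UNIV // sim_rel B b)"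
    using Q(2) G(2) fix_count[OF d, of b] by simp
  then have "real (nat \<bar>det B\<bar>) + real (O_count B b) = 2 * real (card (UNIV // sim_rel B b))"
    by (metis of_nat_add of_nat_mult of_nat_numeral)
  then show "real (card (UNIV // sim_rel B b)) = (real_of_int \<bar>det B\<bar> + real (O_count B b)) / 2"
    by simp
qed

end
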